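(* Let $(\mathbf Y_i)_{i\in\mathbb N}$ be a $p$-dimensional stationary time series on a probability space on which, for each $m\in\mathbb N$, $\mathbf W_{1,m},\mathbf W_{2,m}$ are independent $p$-dimensional standard Brownian motions, such that the long-run covariance matrix $\Sigma=\mathrm{Cov}(\mathbf Y_1,\mathbf Y_1)+\sum_{i\ge2}\{\mathrm{Cov}(\mathbf Y_1,\mathbf Y_i)+\mathrm{Cov}(\mathbf Y_i,\mathbf Y_1)\}$ exists and is positive definite, and for some $0<\xi<\frac12$, $$\sup_{k>m}\frac{1}{(k-m)^\xi}\Big\|\sum_{i=m+1}^k\{\mathbf Y_i-\mathbb E(\mathbf Y_1)\}-\Sigma^{1/2}\mathbf W_{1,m}(k-m)\Big\|_2=O_{\mathbb P}(1),\quad\frac{1}{m^\xi}\Big\|\sum_{i=1}^m\{\mathbf Y_i-\mathbb E(\mathbf Y_1)\}-\Sigma^{1/2}\mathbf W_{2,m}(m)\Big\|_2=O_{\mathbb P}(1).$$ For $k\ge m+1$ define $$\tilde D_m(k)=\max_{j\in\{m,\dots,k-1\}}\frac{j(k-j)}{m^{3/2}}\|\bar{\mathbf Y}_{1:j}-\bar{\mathbf Y}_{j+1:k}\|_{\Sigma^{-1}},$$ $$\bar D_m(k)=\frac{1}{\sqrt m}\max_{j\in\{m,\dots,k-1\}}\Big\|\tfrac km\Sigma^{1/2}\{\mathbf W_{2,m}(m)+\mathbf W_{1,m}(j-m)\}-\tfrac jm\Sigma^{1/2}\{\mathbf W_{2,m}(m)+\mathbf W_{1,m}(k-m)\}\Big\|_{\Sigma^{-1}}.$$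 Then for any $\eta>0$, $\sup_{k>m}(m/k)^{\frac32+\eta}|\tilde D_m(k)-\bar D_m(k)|=o_{\mathbb P}(1)$ as $m\to\infty$.
   Context: $\bar{\mathbf Y}_{j:k}=\frac1{k-j+1}\sum_{i=j}^k\mathbf Y_i$. For $M$ positive definite, $\|\mathbf y\|_M=\sqrt{(\mathbf y^\top M\mathbf y)/p}$; $\|\cdot\|_2$ is the Euclidean norm; $\Sigma^{1/2}$ is the symmetric positive-definite square root. *)

theory Defs
  imports "HOL-Probability.Probability"
begin

definition stationary_ts :: "'a measure \<Rightarrow> (nat \<Rightarrow> 'a \<Rightarrow> real^'p) \<Rightarrow> bool" where
  "stationary_ts M Y \<longleftrightarrow>
     (\<forall>I h. finite I \<longrightarrow> I \<subseteq> {1..} \<longrightarrow>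
        distr M (PiM I (\<lambda>_. borel)) (\<lambda>\<omega>. \<lambda>i\<in>I. Y (i + h) \<omega>)
      = distr M (PiM I (\<lambda>_. borel)) (\<lambda>\<omega>. \<lambda>i\<in>I. Y i \<omega>))"

definition indep_std_BMs :: "'a measure \<Rightarrow> ('i \<Rightarrow> real \<Rightarrow> 'a \<Rightarrow> real) \<Rightarrow> 'i set \<Rightarrow> bool" where
  "indep_std_BMs M X I \<longleftrightarrow>
     (\<forall>c\<in>I. \<forall>t. X c t \<in> borel_measurable M) \<and>
     (\<forall>c\<in>I. AE \<omega> in M. X c 0 \<omega> = 0 \<and> continuous_on {0..} (\<lambda>t. X c t \<omega>)) \<and>
     (\<forall>(n::nat) (t::nat \<Rightarrow> real). t 0 = 0 \<and> (\<forall>i<n. t i < t (Suc i)) \<longrightarrow>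
        prob_space.indep_vars M (\<lambda>_. borel)
          (\<lambda>(c, i) \<omega>. X c (t (Suc i)) \<omega> - X c (t i) \<omega>) (I \<times> {..<n}) \<and>
        (\<forall>c\<in>I. \<forall>i<n. distributed M lborel (\<lambda>\<omega>. X c (t (Suc i)) \<omega> - X c (t i) \<omega>)
                    (\<lambda>x. ennreal (normal_density 0 (sqrt (t (Suc i) - t i)) x))))"

(* W1, W2 are independent p-dimensional standard Brownian motions:
   all 2p coordinate processes are independent standard 1-d Brownian motions *)
definition indep_pair_BM :: "'a measure \<Rightarrow> (real \<Rightarrow> 'a \<Rightarrow> real^'p) \<Rightarrow> (real \<Rightarrow> 'a \<Rightarrow> real^'p) \<Rightarrow> bool" where
  "indep_pair_BM M W1 W2 \<longleftrightarrow>
     indep_std_BMs M (\<lambda>(b, c) t \<omega>. (if b then W1 t \<omega> else W2 t \<omega>) $ c) (UNIV :: (bool \<times> 'p) set)"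

definition mean_vec :: "'a measure \<Rightarrow> ('a \<Rightarrow> real^'p) \<Rightarrow> real^'p" where
  "mean_vec M X = (\<chi> c. LINT \<omega>|M. X \<omega> $ c)"

definition cov_mat :: "'a measure \<Rightarrow> ('a \<Rightarrow> real^'p) \<Rightarrow> ('a \<Rightarrow> real^'p) \<Rightarrow> real^'p^'p" where
  "cov_mat M X Z = (\<chi> a b. LINT \<omega>|M. (X \<omega> $ a - mean_vec M X $ a) * (Z \<omega> $ b - mean_vec M Z $ b))"

definition lr_cov :: "'a measure \<Rightarrow> (nat \<Rightarrow> 'a \<Rightarrow> real^'p) \<Rightarrow> real^'p^'p" where
  "lr_cov M Y = cov_mat M (Y 1) (Y 1) +
     (\<Sum>i. cov_mat M (Y 1) (Y (i + 2)) + cov_mat M (Y (i + 2)) (Y 1))"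

definition pos_def_mat :: "real^'p^'p \<Rightarrow> bool" where
  "pos_def_mat A \<longleftrightarrow> transpose A = A \<and> (\<forall>x. x \<noteq> 0 \<longrightarrow> x \<bullet> (A *v x) > 0)"

definition mat_sqrt :: "real^'p^'p \<Rightarrow> real^'p^'p" where
  "mat_sqrt A = (THE S. pos_def_mat S \<and> S ** S = A)"

definition Mnorm :: "real^'p^'p \<Rightarrow> real^'p \<Rightarrow> real" where
  "Mnorm A y = sqrt ((y \<bullet> (A *v y)) / real CARD('p))"

definition Ybar :: "(nat \<Rightarrow> 'a \<Rightarrow> real^'p) \<Rightarrow> nat \<Rightarrow> nat \<Rightarrow> 'a \<Rightarrow> real^'p" where
  "Ybar Y j k \<omega> = (1 / real (k - j + 1)) *\<^sub>R (\<Sum>i\<in>{j..k}. Y i \<omega>)"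

definition Dtilde :: "real^'p^'p \<Rightarrow> (nat \<Rightarrow> 'a \<Rightarrow> real^'p) \<Rightarrow> nat \<Rightarrow> nat \<Rightarrow> 'a \<Rightarrow> real" where
  "Dtilde \<Sigma> Y m k \<omega> = Max ((\<lambda>j. real (j * (k - j)) / real m powr (3/2) *
        Mnorm (matrix_inv \<Sigma>) (Ybar Y 1 j \<omega> - Ybar Y (j + 1) k \<omega>)) ` {m..<k})"

definition Dbar :: "real^'p^'p \<Rightarrow> (real \<Rightarrow> 'a \<Rightarrow> real^'p) \<Rightarrow> (real \<Rightarrow> 'a \<Rightarrow> real^'p)
                      \<Rightarrow> nat \<Rightarrow> nat \<Rightarrow> 'a \<Rightarrow> real" where
  "Dbar \<Sigma> W1 W2 m k \<omega> = (1 / sqrt (real m)) * Max ((\<lambda>j. Mnorm (matrix_inv \<Sigma>)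
        ((real k / real m) *\<^sub>R (mat_sqrt \<Sigma> *v (W2 (real m) \<omega> + W1 (real (j - m)) \<omega>))
       - (real j / real m) *\<^sub>R (mat_sqrt \<Sigma> *v (W2 (real m) \<omega> + W1 (real (k - m)) \<omega>)))) ` {m..<k})"

end

theory Submission
  imports Defs
begin

lemma psd_disc:
  fixes a b c :: real
  assumes "\<forall>t. 0 \<le> a + t * b + t^2 * c" and "c \<ge> 0"
  shows "b^2 \<le> 4 * a * c"
proof (cases "c > 0")
  case True
  have "0 \<le> a + (-b/(2*c)) * b + (-b/(2*c))^2 * c" using assms by blast
  also have "\<dots> = a - b^2/(4*c)" using True by (simp add: field_simps power2_eq_square)
  finally show ?thesis using True by (simp add: field_simps)
next
  case False
  then have c0: "c = 0" using assms(2) by simp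
  have "b = 0"
  proof (rule ccontr)
    assume "b \<noteq> 0"
    have "0 \<le> a + (-(a+1)/b) * b + (-(a+1)/b)^2 * c" using assms by blast
    also have "\<dots> = -1" using c0 \<open>b \<noteq> 0\<close> by simp
    finally show False by simp
  qed
  then show ?thesis using c0 by simp
qed

lemma mnorm_tri:
  fixes A :: "real^'n^'n"
  assumes psd: "\<forall>x. 0 \<le> x \<bullet> (A *v x)"
  shows "sqrt((x+y) \<bullet> (A *v (x+y))) \<le> sqrt(x \<bullet> (A *v x)) + sqrt(y \<bullet> (A *v y))"
proof -
  define a where "a = x \<bullet> (A *v x)"
  define c where "c = y \<bullet> (A *v y)"
  define b where "b = x \<bullet> (A *v y) + y \<bullet> (A *v x)"
  have e: "(x + t *\<^sub>R y) \<bullet> (A *v (x + t *\<^sub>R y)) = a + t * b + t^2 * c" for t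
    by (simp add: a_def b_def c_def matrix_vector_right_distrib matrix_vector_mult_scaleR
          inner_add_left inner_add_right algebra_simps power2_eq_square)
  have disc: "\<forall>t. 0 \<le> a + t * b + t^2 * c" using psd e by metis
  have a0: "a \<ge> 0" and c0: "c \<ge> 0" using psd a_def c_def by auto
  have bb: "b^2 \<le> 4 * a * c" using psd_disc disc c0 by blast
  have "b \<le> 2 * sqrt a * sqrt c"
  proof -
    have "b \<le> \<bar>b\<bar>" by simp
    also have "\<bar>b\<bar> = sqrt (b^2)" by simp
    also have "\<dots> \<le> sqrt (4 * a * c)" using bb by (rule real_sqrt_le_mono)
    also have "\<dots> = 2 * sqrt a * sqrt c" by (simp add: real_sqrt_mult)
    finally show ?thesis .
  qed
  have "(x+y) \<bullet> (A *v (x+y)) = a + b + c" using e[of 1] by simp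
  also have "\<dots> \<le> (sqrt a + sqrt c)^2" using \<open>b \<le> _\<close> a0 c0 by (simp add: power2_eq_square algebra_simps)
  finally have "sqrt((x+y) \<bullet> (A *v (x+y))) \<le> sqrt ((sqrt a + sqrt c)^2)" by (rule real_sqrt_le_mono)
  also have "\<dots> = sqrt a + sqrt c" using a0 c0 by simp
  finally show ?thesis by (simp add: a_def c_def)
qed


lemma posdef_inv_psd:
  fixes S :: "real^'n^'n"
  assumes "pos_def_mat S"
  shows "\<forall>y. 0 \<le> y \<bullet> (matrix_inv S *v y)"
proof
  fix y :: "real^'n"
  have ker: "\<forall>x. S *v x = 0 \<longrightarrow> x = 0"
  proof (intro allI impI)
    fix x :: "real^'n" assume "S *v x = 0"
    then show "x = 0" using assms unfolding pos_def_mat_def by (metis inner_zero_right less_irrefl)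
  qed
  then have "invertible S" using matrix_left_invertible_ker invertible_left_inverse by blast
  then have "S ** matrix_inv S = mat 1 \<and> matrix_inv S ** S = mat 1"
    unfolding invertible_def matrix_inv_def by (rule someI_ex)
  then have Sx: "S *v (matrix_inv S *v y) = y"
    by (metis matrix_vector_mul_assoc matrix_vector_mul_lid)
  define x where "x = matrix_inv S *v y"
  have "y \<bullet> (matrix_inv S *v y) = x \<bullet> (S *v x)"
    using Sx by (simp add: x_def inner_commute)
  also have "\<dots> \<ge> 0" using assms unfolding pos_def_mat_def
    by (cases "x = 0") (auto intro: less_imp_le)
  finally show "0 \<le> y \<bullet> (matrix_inv S *v y)" .
qed

lemma Mnorm_eq: "Mnorm A y = sqrt (y \<bullet> (A *v y)) / sqrt (real CARD('n))"
  for A :: "real^'n^'n"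
  by (simp add: Mnorm_def real_sqrt_divide)

lemma Mnorm_tri:
  fixes A :: "real^'n^'n"
  assumes psd: "\<forall>x. 0 \<le> x \<bullet> (A *v x)"
  shows "Mnorm A (x + y) \<le> Mnorm A x + Mnorm A y"
  using mnorm_tri[OF psd, of x y] unfolding Mnorm_eq
  by (simp add: add_divide_distrib[symmetric] divide_right_mono)

lemma Mnorm_scale:
  fixes A :: "real^'n^'n"
  shows "Mnorm A (c *\<^sub>R x) = \<bar>c\<bar> * Mnorm A x"
proof -
  have "(c *\<^sub>R x) \<bullet> (A *v (c *\<^sub>R x)) = c^2 * (x \<bullet> (A *v x))"
    by (simp add: matrix_vector_mult_scaleR power2_eq_square)
  then show ?thesis unfolding Mnorm_eq by (simp add: real_sqrt_mult)
qed

lemma Mnorm_diff: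
  fixes A :: "real^'n^'n"
  assumes psd: "\<forall>x. 0 \<le> x \<bullet> (A *v x)"
  shows "\<bar>Mnorm A x - Mnorm A y\<bar> \<le> Mnorm A (x - y)"
proof -
  have 1: "Mnorm A x \<le> Mnorm A (x - y) + Mnorm A y"
    using Mnorm_tri[OF psd, of "x - y" y] by simp
  have "Mnorm A y \<le> Mnorm A (y - x) + Mnorm A x"
    using Mnorm_tri[OF psd, of "y - x" x] by simp
  moreover have "Mnorm A (y - x) = Mnorm A (x - y)"
    using Mnorm_scale[of A "-1" "x - y"] by simp
  ultimately show ?thesis using 1 by linarith
qed

lemma Mnorm_bound:
  fixes A :: "real^'n^'n"
  assumes psd: "\<forall>x. 0 \<le> x \<bullet> (A *v x)"
  shows "\<exists>K>0. \<forall>v. Mnorm A v \<le> K * norm v"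
proof -
  obtain B where B: "B > 0" "\<And>x. norm (A *v x) \<le> B * norm x"
    using linear_bounded_pos[OF matrix_vector_mul_linear] by blast
  have "Mnorm A v \<le> sqrt B * norm v" for v
  proof -
    have yb: "y \<bullet> (A *v y) \<le> B * (norm y)^2" for y :: "real^'n"
    proof -
      have "y \<bullet> (A *v y) \<le> norm y * norm (A *v y)" by (metis Cauchy_Schwarz_ineq2 abs_le_D1)
      also have "\<dots> \<le> norm y * (B * norm y)" using B by (simp add: mult_left_mono)
      finally show ?thesis by (simp add: power2_eq_square algebra_simps)
    qed
    have p1: "real CARD('n) \<ge> 1" by simp
    have "Mnorm A v \<le> sqrt (v \<bullet> (A *v v))" unfolding Mnorm_def
      using psd[rule_format, of v] p1 by (intro real_sqrt_le_mono) (simp add: divide_le_eq mult_le_cancel_left1)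
    also have "\<dots> \<le> sqrt (B * (norm v)^2)" using yb real_sqrt_le_mono by blast
    also have "\<dots> = sqrt B * norm v" by (simp add: real_sqrt_mult)
    finally show ?thesis .
  qed
  then show ?thesis using B by (intro exI[of _ "sqrt B"]) auto
qed


lemma Max_diff_bound:
  fixes f g :: "nat \<Rightarrow> real"
  assumes "finite J" "J \<noteq> {}" "\<forall>j\<in>J. \<bar>f j - g j\<bar> \<le> b"
  shows "\<bar>Max (f ` J) - Max (g ` J)\<bar> \<le> b"
proof -
  obtain j1 where j1: "j1 \<in> J" "Max (f ` J) = f j1"
  proof -
    have "Max (f ` J) \<in> f ` J" using Max_in[of "f ` J"] assms by auto
    then show ?thesis using that by auto
  qed
  obtain j2 where j2: "j2 \<in> J" "Max (g ` J) = g j2"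
  proof -
    have "Max (g ` J) \<in> g ` J" using Max_in[of "g ` J"] assms by auto
    then show ?thesis using that by auto
  qed
  have "g j1 \<le> Max (g ` J)" using j1 assms by auto
  moreover have "f j2 \<le> Max (f ` J)" using j2 assms by auto
  moreover have "\<bar>f j1 - g j1\<bar> \<le> b" "\<bar>f j2 - g j2\<bar> \<le> b" using assms j1 j2 by auto
  ultimately show ?thesis using j1 j2 by linarith
qed

lemma mult_Max:
  fixes g :: "nat \<Rightarrow> real"
  assumes "finite J" "J \<noteq> {}" "c \<ge> 0"
  shows "c * Max (g ` J) = Max ((\<lambda>j. c * g j) ` J)"
proof -
  have "mono ((*) c)" using assms(3) by (simp add: mono_def mult_left_mono)
  then have "c * Max (g ` J) = Max ((*) c ` g ` J)"
    using mono_Max_commute[of "(*) c" "g ` J"] assms by auto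
  then show ?thesis by (simp add: image_image)
qed


lemma Ybar_ident:
  fixes Y :: "nat \<Rightarrow> 'a \<Rightarrow> real^'p"
  assumes "1 \<le> j" "j < k"
  shows "real (j*(k-j)) *\<^sub>R (Ybar Y 1 j \<omega> - Ybar Y (j+1) k \<omega>)
       = real k *\<^sub>R (\<Sum>i\<in>{1..j}. Y i \<omega>) - real j *\<^sub>R (\<Sum>i\<in>{1..k}. Y i \<omega>)"
proof -
  define Sj where "Sj = (\<Sum>i\<in>{1..j}. Y i \<omega>)"
  define U where "U = (\<Sum>i\<in>{j+1..k}. Y i \<omega>)"
  have Sk: "(\<Sum>i\<in>{1..k}. Y i \<omega>) = Sj + U"
  proof -
    have "{1..k} = {1..j} \<union> {j+1..k}" using assms by auto
    then show ?thesis unfolding Sj_def U_def by (simp add: sum.union_disjoint ivl_disj_int)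
  qed
  have y1: "Ybar Y 1 j \<omega> = (1 / real j) *\<^sub>R Sj" unfolding Ybar_def Sj_def using assms by (simp add: of_nat_diff)
  have y2: "Ybar Y (j+1) k \<omega> = (1 / real (k - j)) *\<^sub>R U" unfolding Ybar_def U_def
    using assms by (simp add: Suc_diff_Suc)
  have jp: "real j > 0" and kj: "real (k - j) > 0" using assms by auto
  have "real (j*(k-j)) *\<^sub>R (Ybar Y 1 j \<omega> - Ybar Y (j+1) k \<omega>)
      = real (k - j) *\<^sub>R Sj - real j *\<^sub>R U"
    unfolding y1 y2 using jp kj by (simp add: scaleR_diff_right)
  also have "\<dots> = real k *\<^sub>R Sj - real j *\<^sub>R (Sj + U)"
    using assms by (simp add: of_nat_diff scaleR_diff_left scaleR_add_right algebra_simps)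
  finally show ?thesis unfolding Sk Sj_def .
qed


lemma m32: "real m > 0 \<Longrightarrow> real m powr (3/2) = real m * sqrt (real m)"
proof -
  assume "real m > 0"
  have "real m powr (3/2) = real m powr (1 + 1/2)" by simp
  also have "\<dots> = real m powr 1 * real m powr (1/2)" by (rule powr_add)
  also have "\<dots> = real m * sqrt (real m)" using \<open>real m > 0\<close> by (simp add: powr_half_sqrt)
  finally show ?thesis .
qed

lemma core:
  fixes Y :: "nat \<Rightarrow> 'a \<Rightarrow> real^'p" and W1 W2 :: "real \<Rightarrow> 'a \<Rightarrow> real^'p"
    and S :: "real^'p^'p"
  assumes psd: "\<forall>x. 0 \<le> x \<bullet> (matrix_inv S *v x)"
    and K: "\<forall>v. Mnorm (matrix_inv S) v \<le> K * norm v" "K \<ge> 0"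
    and m: "1 \<le> m" "m < k"
    and err: "\<forall>n. m \<le> n \<longrightarrow> n \<le> k \<longrightarrow> norm ((\<Sum>i\<in>{1..n}. Y i \<omega>) - real n *\<^sub>R \<mu>
               - mat_sqrt S *v (W2 (real m) \<omega> + W1 (real (n - m)) \<omega>)) \<le> E"
  shows "\<bar>Dtilde S Y m k \<omega> - Dbar S W1 W2 m k \<omega>\<bar> \<le> K * (2 * real k * E) / real m powr (3/2)"
proof -
  define A where "A = matrix_inv S"
  define R where "R = mat_sqrt S"
  define J where "J = {m..<k}"
  define c where "c = 1 / real m powr (3/2)"
  define Sn where "Sn n = (\<Sum>i\<in>{1..n}. Y i \<omega>)" for n
  define B where "B n = R *v (W2 (real m) \<omega> + W1 (real (n - m)) \<omega>)" for n
  define e where "e n = Sn n - real n *\<^sub>R \<mu> - B n" for n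
  have mpos: "real m > 0" using m by simp
  have c0: "c > 0" unfolding c_def using mpos by simp
  have J: "finite J" "J \<noteq> {}" unfolding J_def using m by auto
  define f where "f j = real (j * (k - j)) / real m powr (3/2) *
        Mnorm A (Ybar Y 1 j \<omega> - Ybar Y (j + 1) k \<omega>)" for j
  define g where "g j = Mnorm A ((real k / real m) *\<^sub>R (R *v (W2 (real m) \<omega> + W1 (real (j - m)) \<omega>))
       - (real j / real m) *\<^sub>R (R *v (W2 (real m) \<omega> + W1 (real (k - m)) \<omega>)))" for j
  have Dt: "Dtilde S Y m k \<omega> = Max (f ` J)" unfolding Dtilde_def f_def J_def A_def ..
  have Db: "Dbar S W1 W2 m k \<omega> = Max ((\<lambda>j. 1 / sqrt (real m) * g j) ` J)"
    unfolding Dbar_def g_def J_def A_def R_def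
    using mult_Max[OF J[unfolded J_def], of "1 / sqrt (real m)"] by simp
  have fj: "f j = Mnorm A (c *\<^sub>R (real k *\<^sub>R Sn j - real j *\<^sub>R Sn k))" if "j \<in> J" for j
  proof -
    have "f j = c * real (j * (k - j)) * Mnorm A (Ybar Y 1 j \<omega> - Ybar Y (j + 1) k \<omega>)"
      unfolding f_def c_def by simp
    also have "\<dots> = Mnorm A ((c * real (j * (k - j))) *\<^sub>R (Ybar Y 1 j \<omega> - Ybar Y (j + 1) k \<omega>))"
      using c0 by (simp add: Mnorm_scale)
    also have "(c * real (j * (k - j))) *\<^sub>R (Ybar Y 1 j \<omega> - Ybar Y (j + 1) k \<omega>)
        = c *\<^sub>R (real k *\<^sub>R Sn j - real j *\<^sub>R Sn k)"
    proof -
      have "1 \<le> j" "j < k" using that m unfolding J_def by auto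
      from Ybar_ident[OF this, of Y \<omega>] show ?thesis unfolding Sn_def
        by (metis scaleR_scaleR)
    qed
    finally show ?thesis .
  qed
  have gj: "1 / sqrt (real m) * g j = Mnorm A (c *\<^sub>R (real k *\<^sub>R B j - real j *\<^sub>R B k))" for j
  proof -
    have "1 / sqrt (real m) * g j = Mnorm A ((1 / sqrt (real m)) *\<^sub>R ((real k / real m) *\<^sub>R B j
       - (real j / real m) *\<^sub>R B k))"
      unfolding g_def B_def by (simp add: Mnorm_scale)
    also have "(1 / sqrt (real m)) *\<^sub>R ((real k / real m) *\<^sub>R B j - (real j / real m) *\<^sub>R B k)
        = c *\<^sub>R (real k *\<^sub>R B j - real j *\<^sub>R B k)"
      unfolding c_def m32[OF mpos] by (simp add: scaleR_diff_right mult.commute)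
    finally show ?thesis .
  qed
  have "\<bar>f j - 1 / sqrt (real m) * g j\<bar> \<le> K * (2 * real k * E) / real m powr (3/2)" if "j \<in> J" for j
  proof -
    have jk: "m \<le> j" "j \<le> k" using that unfolding J_def by auto
    have ident: "c *\<^sub>R (real k *\<^sub>R Sn j - real j *\<^sub>R Sn k) - c *\<^sub>R (real k *\<^sub>R B j - real j *\<^sub>R B k)
        = c *\<^sub>R (real k *\<^sub>R e j - real j *\<^sub>R e k)"
      unfolding e_def by (simp add: algebra_simps)
    have ej: "norm (e j) \<le> E" and ek: "norm (e k) \<le> E"
      using err jk m unfolding e_def Sn_def B_def R_def by auto
    have "norm (real k *\<^sub>R e j - real j *\<^sub>R e k) \<le> real k * norm (e j) + real j * norm (e k)"
      by (rule order_trans[OF norm_triangle_ineq4]) simp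
    also have "\<dots> \<le> real k * E + real k * E"
      using ej ek jk by (intro add_mono mult_mono) auto
    finally have nb: "norm (real k *\<^sub>R e j - real j *\<^sub>R e k) \<le> 2 * real k * E" by (simp add: algebra_simps)
    have "\<bar>f j - 1 / sqrt (real m) * g j\<bar> \<le> Mnorm A (c *\<^sub>R (real k *\<^sub>R e j - real j *\<^sub>R e k))"
      unfolding fj[OF that] gj ident[symmetric] using Mnorm_diff psd A_def by blast
    also have "\<dots> \<le> K * norm (c *\<^sub>R (real k *\<^sub>R e j - real j *\<^sub>R e k))" using K A_def by blast
    also have "\<dots> = K * c * norm (real k *\<^sub>R e j - real j *\<^sub>R e k)" using c0 by simp
    also have "\<dots> \<le> K * c * (2 * real k * E)" using nb K c0 by (simp add: mult_left_mono)
    finally show ?thesis unfolding c_def by simp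
  qed
  then show ?thesis unfolding Dt Db by (intro Max_diff_bound J) auto
qed


lemma powr_core:
  fixes m k \<xi> \<eta> :: real
  assumes "1 \<le> m" "m \<le> k" "\<xi> < 1/2" "\<eta> > 0"
  shows "(m / k) powr (3/2 + \<eta>) * (k * k powr \<xi> / m powr (3/2)) \<le> m powr (\<xi> - 1/2)"
proof -
  have m0: "m > 0" and k0: "k > 0" using assms by auto
  have "(m / k) powr (3/2 + \<eta>) * (k * k powr \<xi> / m powr (3/2))
      = (m powr (3/2 + \<eta>) / m powr (3/2)) * (k powr (1 + \<xi>) / k powr (3/2 + \<eta>))"
    using m0 k0 by (simp add: powr_divide powr_add)
  also have "\<dots> = m powr \<eta> * k powr (\<xi> - 1/2 - \<eta>)"
    using m0 k0 by (simp add: powr_diff[symmetric] algebra_simps)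
  also have "\<dots> \<le> m powr \<eta> * m powr (\<xi> - 1/2 - \<eta>)"
    using assms m0 by (intro mult_left_mono powr_mono2') auto
  also have "\<dots> = m powr (\<xi> - 1/2)" by (simp add: powr_add[symmetric])
  finally show ?thesis .
qed


lemma err_split:
  fixes Y :: "nat \<Rightarrow> real^'p" and R :: "real^'p^'p"
  assumes "m \<le> n"
  shows "(\<Sum>i\<in>{1..n}. Y i) - real n *\<^sub>R \<mu> - R *v (w2 + w1)
       = ((\<Sum>i\<in>{1..m}. Y i - \<mu>) - R *v w2) + ((\<Sum>i\<in>{m+1..n}. Y i - \<mu>) - R *v w1)"
proof -
  have "(\<Sum>i\<in>{1..n}. Y i) - real n *\<^sub>R \<mu> = (\<Sum>i\<in>{1..n}. Y i - \<mu>)"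
    by (simp add: sum_subtractf sum_constant_scaleR del: sum_constant)
  also have "\<dots> = (\<Sum>i\<in>{1..m}. Y i - \<mu>) + (\<Sum>i\<in>{m+1..n}. Y i - \<mu>)"
  proof -
    have "{1..n} = {1..m} \<union> {m+1..n}" using assms by auto
    then show ?thesis by (simp add: sum.union_disjoint ivl_disj_int)
  qed
  finally show ?thesis by (simp add: matrix_vector_right_distrib algebra_simps)
qed

theorem lemmaA1:
  fixes M :: "'a measure" and Y :: "nat \<Rightarrow> 'a \<Rightarrow> real^'p"
    and W1 W2 :: "nat \<Rightarrow> real \<Rightarrow> 'a \<Rightarrow> real^'p" and \<xi> \<eta> :: real
  assumes "prob_space M"
    and "\<forall>i. Y i \<in> borel_measurable M"
    and "\<forall>i c. integrable M (\<lambda>\<omega>. (Y i \<omega> $ c)\<^sup>2)"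
    and "stationary_ts M Y"
    and "\<forall>m. indep_pair_BM M (W1 m) (W2 m)"
    and "summable (\<lambda>i. cov_mat M (Y 1) (Y (i + 2)) + cov_mat M (Y (i + 2)) (Y 1))"
    and "pos_def_mat (lr_cov M Y)"
    and "0 < \<xi>" and "\<xi> < 1/2"
    and "\<forall>\<epsilon>>0. \<exists>C N. \<forall>m\<ge>N. measure M {\<omega>\<in>space M. \<exists>k>m.
           norm ((\<Sum>i\<in>{m+1..k}. Y i \<omega> - mean_vec M (Y 1))
                 - mat_sqrt (lr_cov M Y) *v W1 m (real (k - m)) \<omega>) > C * real (k - m) powr \<xi>} \<le> \<epsilon>"
    and "\<forall>\<epsilon>>0. \<exists>C N. \<forall>m\<ge>N. measure M {\<omega>\<in>space M.
           norm ((\<Sum>i\<in>{1..m}. Y i \<omega> - mean_vec M (Y 1))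
                 - mat_sqrt (lr_cov M Y) *v W2 m (real m) \<omega>) > C * real m powr \<xi>} \<le> \<epsilon>"
    and "\<eta> > 0"
  shows "\<forall>\<epsilon>>0. (\<lambda>m. measure M {\<omega>\<in>space M. \<exists>k>m.
           (real m / real k) powr (3/2 + \<eta>) *
           \<bar>Dtilde (lr_cov M Y) Y m k \<omega> - Dbar (lr_cov M Y) (W1 m) (W2 m) m k \<omega>\<bar> > \<epsilon>})
         \<longlonglongrightarrow> 0"
proof (intro allI impI)
  fix \<epsilon> :: real assume eps: "\<epsilon> > 0"
  interpret P: prob_space M by (rule assms(1))
  define S where "S = lr_cov M Y"
  define \<mu> where "\<mu> = mean_vec M (Y 1)"
  define R where "R = mat_sqrt S"
  have psd: "\<forall>x. 0 \<le> x \<bullet> (matrix_inv S *v x)"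
    unfolding S_def by (rule posdef_inv_psd[OF assms(7)])
  obtain K where K: "K > 0" "\<forall>v. Mnorm (matrix_inv S) v \<le> K * norm v"
    using Mnorm_bound[OF psd] by blast
  have BM: "\<And>m. indep_std_BMs M (\<lambda>(b, c) t \<omega>. (if b then W1 m t \<omega> else W2 m t \<omega>) $ c) UNIV"
    using assms(5) unfolding indep_pair_BM_def by blast
  have W1c: "(\<lambda>\<omega>. W1 m t \<omega> $ c) \<in> borel_measurable M" for m t c
  proof -
    have "(\<lambda>\<omega>. (\<lambda>(b, c) t \<omega>. (if b then W1 m t \<omega> else W2 m t \<omega>) $ c) (True, c) t \<omega>) \<in> borel_measurable M"
      using BM[of m] unfolding indep_std_BMs_def by blast
    then show ?thesis by simp
  qed
  have W2c: "(\<lambda>\<omega>. W2 m t \<omega> $ c) \<in> borel_measurable M" for m t c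
  proof -
    have "(\<lambda>\<omega>. (\<lambda>(b, c) t \<omega>. (if b then W1 m t \<omega> else W2 m t \<omega>) $ c) (False, c) t \<omega>) \<in> borel_measurable M"
      using BM[of m] unfolding indep_std_BMs_def by blast
    then show ?thesis by simp
  qed
  have W1m[measurable]: "W1 m t \<in> borel_measurable M" for m t
    by (subst borel_measurable_euclidean_space) (auto simp: Basis_vec_def inner_axis W1c)
  have W2m[measurable]: "W2 m t \<in> borel_measurable M" for m t
    by (subst borel_measurable_euclidean_space) (auto simp: Basis_vec_def inner_axis W2c)
  have Ym[measurable]: "Y i \<in> borel_measurable M" for i using assms(2) by blast
  have W0: "AE \<omega> in M. W1 m 0 \<omega> = 0" for m
  proof -
    have "AE \<omega> in M. \<forall>c\<in>UNIV. W1 m 0 \<omega> $ c = 0"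
    proof (rule AE_finite_allI)
      fix c :: 'p
      show "AE \<omega> in M. W1 m 0 \<omega> $ c = 0"
      proof -
        have "AE \<omega> in M. (\<lambda>(b, c) t \<omega>. (if b then W1 m t \<omega> else W2 m t \<omega>) $ c) (True, c) 0 \<omega> = 0
            \<and> continuous_on {0..} (\<lambda>t. (\<lambda>(b, c) t \<omega>. (if b then W1 m t \<omega> else W2 m t \<omega>) $ c) (True, c) t \<omega>)"
          using BM[of m] unfolding indep_std_BMs_def by blast
        then show ?thesis by (rule AE_mp) (auto intro!: AE_I2)
      qed
    qed simp
    then show ?thesis by (rule AE_mp) (auto intro!: AE_I2 simp: vec_eq_iff)
  qed
  show "(\<lambda>m. measure M {\<omega>\<in>space M. \<exists>k>m.
           (real m / real k) powr (3/2 + \<eta>) *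
           \<bar>Dtilde (lr_cov M Y) Y m k \<omega> - Dbar (lr_cov M Y) (W1 m) (W2 m) m k \<omega>\<bar> > \<epsilon>})
         \<longlonglongrightarrow> 0"
  proof (rule LIMSEQ_I)
    fix r :: real assume r: "r > 0"
    obtain C1 N1 where h1: "\<forall>m\<ge>N1. measure M {\<omega>\<in>space M. \<exists>k>m.
           norm ((\<Sum>i\<in>{m+1..k}. Y i \<omega> - \<mu>) - R *v W1 m (real (k - m)) \<omega>) > C1 * real (k - m) powr \<xi>} \<le> r/4"
      using assms(10) r unfolding \<mu>_def R_def S_def by (meson zero_less_divide_iff zero_less_numeral)
    obtain C2 N2 where h2: "\<forall>m\<ge>N2. measure M {\<omega>\<in>space M.
           norm ((\<Sum>i\<in>{1..m}. Y i \<omega> - \<mu>) - R *v W2 m (real m) \<omega>) > C2 * real m powr \<xi>} \<le> r/4"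
      using assms(11) r unfolding \<mu>_def R_def S_def by (meson zero_less_divide_iff zero_less_numeral)
    define C where "C = \<bar>C1\<bar> + \<bar>C2\<bar>"
    have C0: "C \<ge> 0" unfolding C_def by simp
    have "(\<lambda>m. 2 * K * C * real m powr (\<xi> - 1/2)) \<longlonglongrightarrow> 2 * K * C * 0"
      using assms(9) by (intro tendsto_mult tendsto_const tendsto_neg_powr filterlim_real_sequentially) auto
    then obtain N3 where N3: "\<forall>m\<ge>N3. \<bar>2 * K * C * real m powr (\<xi> - 1/2)\<bar> < \<epsilon>"
      using eps by (auto simp: LIMSEQ_iff)
    show "\<exists>no. \<forall>m\<ge>no. norm (measure M {\<omega>\<in>space M. \<exists>k>m.
           (real m / real k) powr (3/2 + \<eta>) *
           \<bar>Dtilde (lr_cov M Y) Y m k \<omega> - Dbar (lr_cov M Y) (W1 m) (W2 m) m k \<omega>\<bar> > \<epsilon>} - 0) < r"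
    proof (intro exI allI impI)
      fix m assume mN: "m \<ge> N1 + N2 + N3 + 1"
      define Bad where "Bad = {\<omega>\<in>space M. \<exists>k>m.
           (real m / real k) powr (3/2 + \<eta>) *
           \<bar>Dtilde (lr_cov M Y) Y m k \<omega> - Dbar (lr_cov M Y) (W1 m) (W2 m) m k \<omega>\<bar> > \<epsilon>}"
      define A1 where "A1 = {\<omega>\<in>space M. \<exists>k>m.
           norm ((\<Sum>i\<in>{m+1..k}. Y i \<omega> - \<mu>) - R *v W1 m (real (k - m)) \<omega>) > C1 * real (k - m) powr \<xi>}"
      define A2 where "A2 = {\<omega>\<in>space M.
           norm ((\<Sum>i\<in>{1..m}. Y i \<omega> - \<mu>) - R *v W2 m (real m) \<omega>) > C2 * real m powr \<xi>}"
      have Rm: "(\<lambda>\<omega>. R *v g \<omega>) \<in> borel_measurable M" if "g \<in> borel_measurable M" for g :: "'a \<Rightarrow> real^'p"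
        using measurable_compose[OF that borel_measurable_continuous_onI[OF matrix_vector_mult_linear_continuous_on[of UNIV R]]]
        by simp
      have sm: "(\<lambda>\<omega>. \<Sum>i\<in>I. Y i \<omega> - \<mu>) \<in> borel_measurable M" for I
        by (intro borel_measurable_sum borel_measurable_diff Ym borel_measurable_const)
      have f1: "(\<lambda>\<omega>. norm ((\<Sum>i\<in>{m+1..k}. Y i \<omega> - \<mu>) - R *v W1 m (real (k - m)) \<omega>)) \<in> borel_measurable M" for k
        apply (rule measurable_compose[OF _ borel_measurable_norm])
        apply (rule borel_measurable_diff)
         apply (rule sm)
        apply (rule Rm)
        apply (rule W1m)
        done
      have f2: "(\<lambda>\<omega>. norm ((\<Sum>i\<in>{1..m}. Y i \<omega> - \<mu>) - R *v W2 m (real m) \<omega>)) \<in> borel_measurable M"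
        apply (rule measurable_compose[OF _ borel_measurable_norm])
        apply (rule borel_measurable_diff)
         apply (rule sm)
        apply (rule Rm)
        apply (rule W2m)
        done
      have A2m: "A2 \<in> sets M" unfolding A2_def
        by (intro borel_measurable_less borel_measurable_const f2)
      have A1m: "A1 \<in> sets M" unfolding A1_def
      proof (rule sets.sets_Collect_countable_Ex)
        fix k
        show "{\<omega> \<in> space M. k > m \<and> norm ((\<Sum>i\<in>{m+1..k}. Y i \<omega> - \<mu>) - R *v W1 m (real (k - m)) \<omega>) > C1 * real (k - m) powr \<xi>} \<in> sets M"
          by (intro sets.sets_Collect_conj sets.sets_Collect_const borel_measurable_less borel_measurable_const f1)
      qed
      have mA1: "measure M A1 \<le> r/4" using h1 mN unfolding A1_def by auto
      have mA2: "measure M A2 \<le> r/4" using h2 mN unfolding A2_def by auto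
      have incl: "AE \<omega> in M. \<omega> \<in> Bad \<longrightarrow> \<omega> \<in> A1 \<union> A2"
        using W0[of m]
      proof (rule AE_mp, intro AE_I2 impI)
        fix \<omega> assume sp: "\<omega> \<in> space M" and w0: "W1 m 0 \<omega> = 0" and bad: "\<omega> \<in> Bad"
        show "\<omega> \<in> A1 \<union> A2"
        proof (rule ccontr)
          assume "\<omega> \<notin> A1 \<union> A2"
          then have nA1: "\<omega> \<notin> A1" and nA2: "\<omega> \<notin> A2" by auto
          have g1: "\<forall>k>m. norm ((\<Sum>i\<in>{m+1..k}. Y i \<omega> - \<mu>) - R *v W1 m (real (k - m)) \<omega>) \<le> C1 * real (k - m) powr \<xi>"
          proof (intro allI impI)
            fix k assume "k > m"
            then show "norm ((\<Sum>i\<in>{m+1..k}. Y i \<omega> - \<mu>) - R *v W1 m (real (k - m)) \<omega>) \<le> C1 * real (k - m) powr \<xi>"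
              using nA1 sp unfolding A1_def by (metis (no_types, lifting) mem_Collect_eq not_le)
          qed
          have g2: "norm ((\<Sum>i\<in>{1..m}. Y i \<omega> - \<mu>) - R *v W2 m (real m) \<omega>) \<le> C2 * real m powr \<xi>"
            using nA2 sp unfolding A2_def by (metis (no_types, lifting) mem_Collect_eq not_le)
          obtain k where k: "k > m" and big: "(real m / real k) powr (3/2 + \<eta>) *
             \<bar>Dtilde S Y m k \<omega> - Dbar S (W1 m) (W2 m) m k \<omega>\<bar> > \<epsilon>"
            using bad unfolding Bad_def S_def by auto
          have m1: "1 \<le> m" using mN by simp
          have err: "\<forall>n. m \<le> n \<longrightarrow> n \<le> k \<longrightarrow> norm ((\<Sum>i\<in>{1..n}. Y i \<omega>) - real n *\<^sub>R \<mu>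
               - mat_sqrt S *v (W2 m (real m) \<omega> + W1 m (real (n - m)) \<omega>)) \<le> C * real k powr \<xi>"
          proof (intro allI impI)
            fix n assume mn: "m \<le> n" and nk: "n \<le> k"
            have e2: "norm ((\<Sum>i\<in>{1..m}. Y i \<omega> - \<mu>) - R *v W2 m (real m) \<omega>) \<le> \<bar>C2\<bar> * real k powr \<xi>"
            proof -
              have "C2 * real m powr \<xi> \<le> \<bar>C2\<bar> * real m powr \<xi>" by (simp add: mult_right_mono)
              also have "\<dots> \<le> \<bar>C2\<bar> * real k powr \<xi>"
                using k assms(8) m1 by (intro mult_left_mono powr_mono2) auto
              finally show ?thesis using g2 by linarith
            qed
            have e1: "norm ((\<Sum>i\<in>{m+1..n}. Y i \<omega> - \<mu>) - R *v W1 m (real (n - m)) \<omega>) \<le> \<bar>C1\<bar> * real k powr \<xi>"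
            proof (cases "n = m")
              case True
              then show ?thesis using w0 by simp
            next
              case False
              then have "n > m" using mn by simp
              then have "norm ((\<Sum>i\<in>{m+1..n}. Y i \<omega> - \<mu>) - R *v W1 m (real (n - m)) \<omega>) \<le> C1 * real (n - m) powr \<xi>"
                using g1 by blast
              also have "C1 * real (n - m) powr \<xi> \<le> \<bar>C1\<bar> * real (n - m) powr \<xi>" by (simp add: mult_right_mono)
              also have "\<dots> \<le> \<bar>C1\<bar> * real k powr \<xi>"
                using nk \<open>n > m\<close> assms(8) by (intro mult_left_mono powr_mono2) auto
              finally show ?thesis .
            qed
            show "norm ((\<Sum>i\<in>{1..n}. Y i \<omega>) - real n *\<^sub>R \<mu>
               - mat_sqrt S *v (W2 m (real m) \<omega> + W1 m (real (n - m)) \<omega>)) \<le> C * real k powr \<xi>"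
              unfolding err_split[OF mn] R_def[symmetric]
              using norm_triangle_le[OF add_mono[OF e2 e1]] unfolding C_def by (simp add: algebra_simps)
          qed
          have core_b: "\<bar>Dtilde S Y m k \<omega> - Dbar S (W1 m) (W2 m) m k \<omega>\<bar>
              \<le> K * (2 * real k * (C * real k powr \<xi>)) / real m powr (3/2)"
            by (rule core[where ?W1.0="W1 m" and ?W2.0="W2 m" and Y=Y and \<omega>=\<omega> and \<mu>=\<mu>, OF psd K(2) less_imp_le[OF K(1)] m1 k err])
          have "(real m / real k) powr (3/2 + \<eta>) * \<bar>Dtilde S Y m k \<omega> - Dbar S (W1 m) (W2 m) m k \<omega>\<bar>
              \<le> (real m / real k) powr (3/2 + \<eta>) * (K * (2 * real k * (C * real k powr \<xi>)) / real m powr (3/2))"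
            by (intro mult_left_mono core_b) simp
          also have "\<dots> = 2 * K * C * ((real m / real k) powr (3/2 + \<eta>) * (real k * real k powr \<xi> / real m powr (3/2)))"
            by (simp add: mult_ac)
          also have "\<dots> \<le> 2 * K * C * real m powr (\<xi> - 1/2)"
            using K C0 m1 k assms(9) assms(12) by (intro mult_left_mono powr_core) auto
          also have "\<dots> < \<epsilon>"
          proof -
            have "m \<ge> N3" using mN by simp
            then have "\<bar>2 * K * C * real m powr (\<xi> - 1/2)\<bar> < \<epsilon>" using N3 by blast
            then show ?thesis by linarith
          qed
          finally show False using big by simp
        qed
      qed
      have "emeasure M Bad \<le> emeasure M (A1 \<union> A2)"
        using incl A1m A2m by (intro emeasure_mono_AE) auto
      then have "measure M Bad \<le> measure M (A1 \<union> A2)"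
        unfolding measure_def by (intro enn2real_mono) (auto simp: less_top[symmetric])
      also have "\<dots> \<le> measure M A1 + measure M A2" using A1m A2m by (rule measure_Un_le)
      finally have "measure M Bad \<le> r/2" using mA1 mA2 by simp
      then show "norm (measure M Bad - 0) < r" using r by simp
    qed
  qed
qed

end
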